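(* Let $\mathcal{X}_1,\mathcal{X}_2$ be non-empty sets, $\mathcal{B}_i\subseteq\mathcal{P}(\mathcal{X}_i)\setminus\{\emptyset\}$ and $\underline{P}_i$ a coherent conditional lower prevision on $\mathcal{C}_i\subseteq\mathcal{C}(\mathcal{X}_i)$ for $i\in\{1,2\}$, and let $\mathcal{C}\subseteq\mathcal{C}(\mathcal{X}_1\times\mathcal{X}_2)$ be an independent domain containing $\mathcal{C}_1$ and $\mathcal{C}_2$. Then the restriction of $\underline{P}_1\otimes\underline{P}_2$ to $\mathcal{C}$ is an independent product of $\underline{P}_1$ and $\underline{P}_2$.
   Context: Gambles on a non-empty set $\mathcal{X}$ are bounded real functions; $\mathcal{G}(\mathcal{X})$ is the set of gambles, $\mathcal{G}_{>0}(\mathcal{X})$ the non-negative non-zero gambles, $\mathbb{I}_A$ the indicator of $A$. For $\mathcal{A}\subseteq\mathcal{G}(\mathcal{X})$: $\mathrm{posi}(\mathcal{A}):=\{\sum_{i=1}^n\lambda_if_i\colon n\in\mathbb{N},\lambda_i>0,f_i\in\mathcal{A}\}$, $\mathcal{E}(\mathcal{A}):=\mathrm{posi}(\mathcal{A}\cup\mathcal{G}_{>0}(\mathcal{X}))$. A coherent set of desirable gambles $\mathcal{D}\subseteq\mathcal{G}(\mathcal{X})$ satisfies: (D1) $f\geq0,f\neq0\Rightarrow f\in\mathcal{D}$; (D2) $f\in\mathcal{D},\lambda>0\Rightarrow\lambda f\in\mathcal{D}$; (D3) $f,g\in\mathcal{D}\Rightarrow f+g\in\mathcal{D}$; (D4)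 $f\leq0\Rightarrow f\notin\mathcal{D}$. $\mathcal{C}(\mathcal{X}):=\mathcal{G}(\mathcal{X})\times(\mathcal{P}(\mathcal{X})\setminus\{\emptyset\})$; a conditional lower prevision on $\mathcal{C}\subseteq\mathcal{C}(\mathcal{X})$ is a map $(f,B)\mapsto\underline{P}(f\vert B)\in\mathbb{R}\cup\{\pm\infty\}$. For $\mathcal{D}\subseteq\mathcal{G}(\mathcal{X})$, $\underline{P}_{\mathcal{D}}(f\vert B):=\sup\{\mu\in\mathbb{R}\colon[f-\mu]\mathbb{I}_B\in\mathcal{D}\}$. $\underline{P}$ is coherent if $\underline{P}=\underline{P}_{\mathcal{D}}$ on its domain for some coherent set of desirable gambles $\mathcal{D}$. For coherent $\underline{P}$ on $\mathcal{C}$, $\mathcal{E}(\underline{P}):=\mathcal{E}(\{[f-\mu]\mathbb{I}_B\colon(f,B)\in\mathcal{C},\mu<\underline{P}(f\vert B)\})$. Gambles/events on $\mathcal{X}_i$ are identified with their cylindrical extensions to $\mathcal{X}_1\times\mathcal{X}_2$ ($B\subseteq\mathcal{X}_1$ with $B\times\mathcal{X}_2$, etc.). For coherent sets of desirable gambles $\mathcal{D}_1,\mathcal{D}_2$: $\mathcal{D}_1\otimes\mathcal{D}_2:=\mathcal{E}(\mathcal{A}_{1\to2}\cup\mathcal{A}_{2\to1})$, $\mathcal{A}_{1\to2}:=\{f_2(X_2)\mathbb{I}_{B_1}(X_1)\colon f_2\in\mathcal{D}_2,B_1\in\mathcal{B}_1\cup\{\mathcal{X}_1\}\}$, $\mathcal{A}_{2\to1}:=\{f_1(X_1)\mathbb{I}_{B_2}(X_2)\colon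 f_1\in\mathcal{D}_1,B_2\in\mathcal{B}_2\cup\{\mathcal{X}_2\}\}$; $(\underline{P}_1\otimes\underline{P}_2)(f\vert B):=\underline{P}_{\mathcal{D}}(f\vert B)$ for $(f,B)\in\mathcal{C}(\mathcal{X}_1\times\mathcal{X}_2)$, $\mathcal{D}=\mathcal{E}(\underline{P}_1)\otimes\mathcal{E}(\underline{P}_2)$. A domain $\mathcal{C}\subseteq\mathcal{C}(\mathcal{X}_1\times\mathcal{X}_2)$ is independent if for all $\{i,j\}=\{1,2\}$, $(f_i,B_i)\in\mathcal{C}(\mathcal{X}_i)$ and $B_j\in\mathcal{B}_j$: $(f_i,B_i)\in\mathcal{C}\iff(f_i,B_i\cap B_j)\in\mathcal{C}$. A coherent $\underline{P}$ on an independent domain $\mathcal{C}$ is epistemically independent if $\underline{P}(f_i\vert B_i)=\underline{P}(f_i\vert B_i\cap B_j)$ for all $\{i,j\}=\{1,2\}$, all $(f_i,B_i)\in\mathcal{C}$ with $f_i,B_i$ on $\mathcal{X}_i$, and all $B_j\in\mathcal{B}_j$. An independent product of $\underline{P}_1,\underline{P}_2$ is an epistemically independent coherent conditional lower prevision on $\mathcal{C}$ that coincides with $\underline{P}_i$ on $\mathcal{C}_i$ for $i=1,2$. *)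

theory Defs
  imports "HOL-Library.Extended_Real" "HOL-Library.Indicator_Function"
begin

text \<open>The possibility spaces X_1, X_2 are represented by (non-empty) types;
  the ambient set X is UNIV of the corresponding type.\<close>

definition gamble :: "('x \<Rightarrow> real) \<Rightarrow> bool" where
  "gamble f \<longleftrightarrow> (\<exists>M. \<forall>x. \<bar>f x\<bar> \<le> M)"

definition gambles :: "('x \<Rightarrow> real) set" where
  "gambles = {f. gamble f}"

definition gambles_pos :: "('x \<Rightarrow> real) set" where
  "gambles_pos = {f. gamble f \<and> (\<forall>x. 0 \<le> f x) \<and> f \<noteq> (\<lambda>x. 0)}"

definition posi :: "('x \<Rightarrow> real) set \<Rightarrow> ('x \<Rightarrow> real) set" where
  "posi A = {g. \<exists>(n::nat) (lam::nat \<Rightarrow> real) (fs::nat \<Rightarrow> 'x \<Rightarrow> real).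
                 0 < n \<and> (\<forall>i<n. 0 < lam i \<and> fs i \<in> A) \<and>
                 g = (\<lambda>x. \<Sum>i<n. lam i * fs i x)}"

definition natext :: "('x \<Rightarrow> real) set \<Rightarrow> ('x \<Rightarrow> real) set" where
  "natext A = posi (A \<union> gambles_pos)"

definition coherent_D :: "('x \<Rightarrow> real) set \<Rightarrow> bool" where
  "coherent_D D \<longleftrightarrow> D \<subseteq> gambles \<and>
     (\<forall>f\<in>gambles. (\<forall>x. 0 \<le> f x) \<and> f \<noteq> (\<lambda>x. 0) \<longrightarrow> f \<in> D) \<and>
     (\<forall>f\<in>D. \<forall>lam::real. 0 < lam \<longrightarrow> (\<lambda>x. lam * f x) \<in> D) \<and>
     (\<forall>f\<in>D. \<forall>g\<in>D. (\<lambda>x. f x + g x) \<in> D) \<and>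
     (\<forall>f\<in>gambles. (\<forall>x. f x \<le> 0) \<longrightarrow> f \<notin> D)"

definition Ccond :: "(('x \<Rightarrow> real) \<times> 'x set) set" where
  "Ccond = {(f, B). gamble f \<and> B \<noteq> {}}"

text \<open>A conditional lower prevision is a map (f,B) \<mapsto> P(f|B) \<in> ereal, considered
  on its domain C.\<close>
type_synonym 'x clp = "('x \<Rightarrow> real) \<Rightarrow> 'x set \<Rightarrow> ereal"

definition cgamble :: "('x \<Rightarrow> real) \<Rightarrow> real \<Rightarrow> 'x set \<Rightarrow> 'x \<Rightarrow> real" where
  "cgamble f \<mu> B = (\<lambda>x. (f x - \<mu>) * indicator B x)"

definition lowprev_D :: "('x \<Rightarrow> real) set \<Rightarrow> 'x clp" where
  "lowprev_D D f B = Sup {ereal \<mu> | \<mu>. cgamble f \<mu> B \<in> D}"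

definition coherent_lp :: "(('x \<Rightarrow> real) \<times> 'x set) set \<Rightarrow> 'x clp \<Rightarrow> bool" where
  "coherent_lp C P \<longleftrightarrow> C \<subseteq> Ccond \<and>
     (\<exists>D. coherent_D D \<and> (\<forall>(f, B)\<in>C. P f B = lowprev_D D f B))"

definition natext_lp :: "(('x \<Rightarrow> real) \<times> 'x set) set \<Rightarrow> 'x clp \<Rightarrow> ('x \<Rightarrow> real) set" where
  "natext_lp C P = natext {cgamble f \<mu> B | f \<mu> B. (f, B) \<in> C \<and> ereal \<mu> < P f B}"

definition cyl1 :: "('a \<Rightarrow> real) \<Rightarrow> ('a \<times> 'b \<Rightarrow> real)" where
  "cyl1 f = (\<lambda>(x1, x2). f x1)"

definition cyl2 :: "('b \<Rightarrow> real) \<Rightarrow> ('a \<times> 'b \<Rightarrow> real)" where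
  "cyl2 f = (\<lambda>(x1, x2). f x2)"

definition cylset1 :: "'a set \<Rightarrow> ('a \<times> 'b) set" where
  "cylset1 B = B \<times> UNIV"

definition cylset2 :: "'b set \<Rightarrow> ('a \<times> 'b) set" where
  "cylset2 B = UNIV \<times> B"

definition prod_D :: "'a set set \<Rightarrow> 'b set set \<Rightarrow> ('a \<Rightarrow> real) set \<Rightarrow> ('b \<Rightarrow> real) set
    \<Rightarrow> ('a \<times> 'b \<Rightarrow> real) set" where
  "prod_D Bs1 Bs2 D1 D2 =
     natext ({(\<lambda>x. cyl2 f2 x * indicator (cylset1 B1) x) | f2 B1. f2 \<in> D2 \<and> B1 \<in> Bs1 \<union> {UNIV}}
           \<union> {(\<lambda>x. cyl1 f1 x * indicator (cylset2 B2) x) | f1 B2. f1 \<in> D1 \<and> B2 \<in> Bs2 \<union> {UNIV}})"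

definition prod_lp :: "'a set set \<Rightarrow> 'b set set \<Rightarrow> (('a \<Rightarrow> real) \<times> 'a set) set \<Rightarrow> 'a clp
    \<Rightarrow> (('b \<Rightarrow> real) \<times> 'b set) set \<Rightarrow> 'b clp \<Rightarrow> ('a \<times> 'b) clp" where
  "prod_lp Bs1 Bs2 C1 P1 C2 P2 =
     lowprev_D (prod_D Bs1 Bs2 (natext_lp C1 P1) (natext_lp C2 P2))"

definition independent_domain :: "'a set set \<Rightarrow> 'b set set
    \<Rightarrow> ((('a \<times> 'b) \<Rightarrow> real) \<times> ('a \<times> 'b) set) set \<Rightarrow> bool" where
  "independent_domain Bs1 Bs2 C \<longleftrightarrow>
     (\<forall>(f1, B1)\<in>Ccond. \<forall>B2\<in>Bs2.
        (cyl1 f1, cylset1 B1) \<in> C \<longleftrightarrow> (cyl1 f1, cylset1 B1 \<inter> cylset2 B2) \<in> C) \<and>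
     (\<forall>(f2, B2)\<in>Ccond. \<forall>B1\<in>Bs1.
        (cyl2 f2, cylset2 B2) \<in> C \<longleftrightarrow> (cyl2 f2, cylset2 B2 \<inter> cylset1 B1) \<in> C)"

definition epistemically_independent :: "'a set set \<Rightarrow> 'b set set
    \<Rightarrow> ((('a \<times> 'b) \<Rightarrow> real) \<times> ('a \<times> 'b) set) set \<Rightarrow> ('a \<times> 'b) clp \<Rightarrow> bool" where
  "epistemically_independent Bs1 Bs2 C P \<longleftrightarrow>
     independent_domain Bs1 Bs2 C \<and> coherent_lp C P \<and>
     (\<forall>(f1, B1)\<in>Ccond. (cyl1 f1, cylset1 B1) \<in> C \<longrightarrow> (\<forall>B2\<in>Bs2.
        P (cyl1 f1) (cylset1 B1) = P (cyl1 f1) (cylset1 B1 \<inter> cylset2 B2))) \<and>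
     (\<forall>(f2, B2)\<in>Ccond. (cyl2 f2, cylset2 B2) \<in> C \<longrightarrow> (\<forall>B1\<in>Bs1.
        P (cyl2 f2) (cylset2 B2) = P (cyl2 f2) (cylset2 B2 \<inter> cylset1 B1)))"

definition independent_product :: "'a set set \<Rightarrow> 'b set set
    \<Rightarrow> (('a \<Rightarrow> real) \<times> 'a set) set \<Rightarrow> 'a clp \<Rightarrow> (('b \<Rightarrow> real) \<times> 'b set) set \<Rightarrow> 'b clp
    \<Rightarrow> ((('a \<times> 'b) \<Rightarrow> real) \<times> ('a \<times> 'b) set) set \<Rightarrow> ('a \<times> 'b) clp \<Rightarrow> bool" where
  "independent_product Bs1 Bs2 C1 P1 C2 P2 C P \<longleftrightarrow>
     epistemically_independent Bs1 Bs2 C P \<and>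
     (\<forall>(f, B)\<in>C1. P (cyl1 f) (cylset1 B) = P1 f B) \<and>
     (\<forall>(f, B)\<in>C2. P (cyl2 f) (cylset2 B) = P2 f B)"

end

theory Submission
  imports Defs
begin


lemma gamble_add: "gamble f \<Longrightarrow> gamble g \<Longrightarrow> gamble (\<lambda>x. f x + g x)"
proof -
  assume "gamble f" "gamble g"
  then obtain M1 M2 where "\<forall>x. \<bar>f x\<bar> \<le> M1" "\<forall>x. \<bar>g x\<bar> \<le> M2" unfolding gamble_def by blast
  then have "\<forall>x. \<bar>f x + g x\<bar> \<le> M1 + M2" by (metis abs_triangle_ineq add_mono order_trans)
  then show ?thesis unfolding gamble_def by blast
qed

lemma gamble_scale: "gamble f \<Longrightarrow> gamble (\<lambda>x. c * f x)"
proof -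
  assume "gamble f"
  then obtain M where M: "\<forall>x. \<bar>f x\<bar> \<le> M" unfolding gamble_def by blast
  have "\<forall>x. \<bar>c * f x\<bar> \<le> \<bar>c\<bar> * M" using M by (simp add: abs_mult mult_left_mono)
  then show ?thesis unfolding gamble_def by blast
qed

lemma gamble_neg: "gamble f \<Longrightarrow> gamble (\<lambda>x. - f x)"
  using gamble_scale[of f "-1"] by simp

lemma gamble_diff: "gamble f \<Longrightarrow> gamble g \<Longrightarrow> gamble (\<lambda>x. f x - g x)"
  using gamble_add[OF _ gamble_neg, of f g] by simp

lemma gamble_const: "gamble (\<lambda>x. c)"
  unfolding gamble_def by blast

lemma gamble_indicator: "gamble (\<lambda>x. c * indicator B x)"
proof -
  have "\<forall>x. \<bar>c * indicator B x\<bar> \<le> \<bar>c\<bar>" by (simp add: indicator_def)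
  then show ?thesis unfolding gamble_def by blast
qed

lemma gamble_mult_indicator: "gamble f \<Longrightarrow> gamble (\<lambda>x. f x * indicator B x)"
proof -
  assume "gamble f"
  then obtain M where M: "\<forall>x. \<bar>f x\<bar> \<le> M" unfolding gamble_def by blast
  have "\<forall>x. \<bar>f x * indicator B x\<bar> \<le> M" using M by (auto simp: indicator_def)
  then show ?thesis unfolding gamble_def by blast
qed

lemma gamble_sum: "finite I \<Longrightarrow> (\<And>i. i \<in> I \<Longrightarrow> gamble (F i)) \<Longrightarrow> gamble (\<lambda>x. \<Sum>i\<in>I. F i x)"
proof (induction I rule: finite_induct)
  case empty then show ?case by (simp add: gamble_const)
next
  case (insert a I) then show ?case by (simp add: gamble_add)
qed

lemma gamble_cyl1: "gamble f \<Longrightarrow> gamble (cyl1 f)"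
  unfolding gamble_def cyl1_def by auto
lemma gamble_cyl2: "gamble f \<Longrightarrow> gamble (cyl2 f)"
  unfolding gamble_def cyl2_def by auto

lemma gamble_section: "gamble h \<Longrightarrow> gamble (\<lambda>x2. h (x1, x2))"
  unfolding gamble_def by blast
lemma gamble_section2: "gamble h \<Longrightarrow> gamble (\<lambda>x1. h (x1, x2))"
  unfolding gamble_def by blast

lemma sum_concat_nat: "(\<Sum>i<n+(m::nat). F i) = (\<Sum>i<n. F i) + (\<Sum>i<m. F (n + i)::real)"
  by (induction m) (simp_all add: add.assoc)

lemma posiI: "0 < (n::nat) \<Longrightarrow> (\<And>i. i < n \<Longrightarrow> 0 < (lam i::real) \<and> fs i \<in> A) \<Longrightarrow>
   g = (\<lambda>x. \<Sum>i<n. lam i * fs i x) \<Longrightarrow> g \<in> posi A"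
  unfolding posi_def mem_Collect_eq by blast

lemma posi_single: "f \<in> A \<Longrightarrow> f \<in> posi A"
  by (rule posiI[of 1 "\<lambda>_. 1" "\<lambda>_. f"]) auto

lemma posi_scale: "f \<in> posi A \<Longrightarrow> 0 < c \<Longrightarrow> (\<lambda>x. c * f x) \<in> posi A"
proof -
  assume "f \<in> posi A" "0 < c"
  from \<open>f \<in> posi A\<close> obtain n :: nat and lam :: "nat \<Rightarrow> real" and fs where H: "0 < n" "\<And>i. i < n \<Longrightarrow> 0 < lam i \<and> fs i \<in> A" "f = (\<lambda>x. \<Sum>i<n. lam i * fs i x)"
    unfolding posi_def mem_Collect_eq by blast
  show ?thesis
  proof (rule posiI[of n "\<lambda>i. c * lam i" fs])
    show "(\<lambda>x. c * f x) = (\<lambda>x. \<Sum>i<n. (c * lam i) * fs i x)"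
      using H(3) by (simp add: sum_distrib_left mult.assoc)
  qed (use H \<open>0 < c\<close> in auto)
qed

lemma posi_add: "f \<in> posi A \<Longrightarrow> g \<in> posi A \<Longrightarrow> (\<lambda>x. f x + g x) \<in> posi A"
proof -
  assume "f \<in> posi A" "g \<in> posi A"
  obtain n :: nat and lam :: "nat \<Rightarrow> real" and fs where H: "0 < n" "\<And>i. i < n \<Longrightarrow> 0 < lam i \<and> fs i \<in> A" "f = (\<lambda>x. \<Sum>i<n. lam i * fs i x)"
    using \<open>f \<in> posi A\<close> unfolding posi_def mem_Collect_eq by blast
  obtain m :: nat and mu :: "nat \<Rightarrow> real" and gs where G: "0 < m" "\<And>i. i < m \<Longrightarrow> 0 < mu i \<and> gs i \<in> A" "g = (\<lambda>x. \<Sum>i<m. mu i * gs i x)"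
    using \<open>g \<in> posi A\<close> unfolding posi_def mem_Collect_eq by blast
  define la where "la i = (if i < n then lam i else mu (i - n))" for i
  define hs where "hs i = (if i < n then fs i else gs (i - n))" for i
  show ?thesis
  proof (rule posiI[of "n+m" la hs])
    show "0 < n + m" using H(1) by simp
    fix i assume "i < n + m" then show "0 < la i \<and> hs i \<in> A"
      using H(2)[of i] G(2)[of "i - n"] unfolding la_def hs_def by auto
  next
    show "(\<lambda>x. f x + g x) = (\<lambda>x. \<Sum>i<n+m. la i * hs i x)"
    proof
      fix x
      have "(\<Sum>i<n+m. la i * hs i x) = (\<Sum>i<n. la i * hs i x) + (\<Sum>i<m. la (n + i) * hs (n + i) x)"
        by (rule sum_concat_nat)
      then show "f x + g x = (\<Sum>i<n+m. la i * hs i x)" using H(3) G(3) unfolding la_def hs_def by simp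
    qed
  qed
qed

lemma posi_induct:
  assumes "h \<in> posi A"
    and gen: "\<And>f. f \<in> A \<Longrightarrow> Q f"
    and sc: "\<And>f c. Q f \<Longrightarrow> 0 < c \<Longrightarrow> Q (\<lambda>x. c * f x)"
    and ad: "\<And>f g. Q f \<Longrightarrow> Q g \<Longrightarrow> Q (\<lambda>x. f x + g x)"
  shows "Q h"
proof -
  obtain n :: nat and lam :: "nat \<Rightarrow> real" and fs where H0: "0 < n" "\<And>i. i < n \<Longrightarrow> 0 < lam i \<and> fs i \<in> A" "h = (\<lambda>x. \<Sum>i<n. lam i * fs i x)"
    using assms(1) unfolding posi_def mem_Collect_eq by blast
  have H: "0 < n" "\<forall>i<n. 0 < lam i \<and> fs i \<in> A" "h = (\<lambda>x. \<Sum>i<n. lam i * fs i x)" using H0 by auto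
  have "\<forall>k. 0 < k \<longrightarrow> k \<le> n \<longrightarrow> Q (\<lambda>x. \<Sum>i<k. lam i * fs i x)"
  proof
    fix k show "0 < k \<longrightarrow> k \<le> n \<longrightarrow> Q (\<lambda>x. \<Sum>i<k. lam i * fs i x)"
    proof (induction k)
      case 0 then show ?case by simp
    next
      case (Suc k)
      show ?case
      proof (intro impI)
        assume "Suc k \<le> n"
        then have T: "Q (\<lambda>x. lam k * fs k x)" using H(2) gen sc by simp
        show "Q (\<lambda>x. \<Sum>i<Suc k. lam i * fs i x)"
        proof (cases "k = 0")
          case True then show ?thesis using T by simp
        next
          case False
          then have "Q (\<lambda>x. \<Sum>i<k. lam i * fs i x)" using Suc.IH \<open>Suc k \<le> n\<close> by simp
          from ad[OF this T] show ?thesis by simp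
        qed
      qed
    qed
  qed
  then have "Q (\<lambda>x. \<Sum>i<n. lam i * fs i x)" using H(1) by blast
  then show ?thesis using H(3) by simp
qed



lemma cone_sep:
  fixes N :: "(nat \<Rightarrow> real) set" and I :: "nat set"
  assumes "finite I" "I \<noteq> {}"
    and "\<And>u v. u \<in> N \<Longrightarrow> v \<in> N \<Longrightarrow> (\<lambda>i. u i + v i) \<in> N"
    and "\<And>u c. u \<in> N \<Longrightarrow> 0 < c \<Longrightarrow> (\<lambda>i. c * u i) \<in> N"
    and "\<And>u v. u \<in> N \<Longrightarrow> (\<And>i. i \<in> I \<Longrightarrow> v i \<le> u i) \<Longrightarrow> v \<in> N"
    and "\<And>u. u \<in> N \<Longrightarrow> (\<And>i. i \<in> I \<Longrightarrow> 0 \<le> u i) \<Longrightarrow> (\<forall>i\<in>I. u i = 0)"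
  shows "\<exists>\<alpha>. (\<forall>i\<in>I. 0 \<le> \<alpha> i) \<and> (\<exists>i\<in>I. 0 < \<alpha> i) \<and> (\<forall>u\<in>N. (\<Sum>i\<in>I. \<alpha> i * u i) \<le> 0)"
  using assms
proof (induction I arbitrary: N rule: finite_ne_induct)
  case (singleton x)
  show ?case
  proof (intro exI[of _ "\<lambda>_. 1"] conjI ballI)
    fix u assume u: "u \<in> N"
    show "(\<Sum>i\<in>{x}. 1 * u i) \<le> 0"
    proof (rule ccontr)
      assume "\<not> (\<Sum>i\<in>{x}. 1 * u i) \<le> 0"
      then have "0 < u x" by simp
      with singleton.prems(4)[OF u] show False by auto
    qed
  qed auto
next
  case (insert x I)
  show ?case
  proof (cases "\<forall>u\<in>N. u x \<le> 0")
    case True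
    show ?thesis
    proof (intro exI[of _ "\<lambda>i. if i = x then 1 else 0"] conjI ballI)
      fix u assume u: "u \<in> N"
      have "(\<Sum>i\<in>insert x I. (if i = x then 1 else 0) * u i) = u x"
        using insert.hyps by (auto simp: sum.insert_if intro!: sum.neutral split: if_splits)
      then show "(\<Sum>i\<in>insert x I. (if i = x then 1 else 0) * u i) \<le> 0" using True u by simp
    qed auto
  next
    case False
    then obtain u0 where u0: "u0 \<in> N" "0 < u0 x" by force
    define N0 where "N0 = {u. u(x := 0) \<in> N}"
    have xI: "x \<notin> I" by fact
    have "\<exists>\<alpha>. (\<forall>i\<in>I. 0 \<le> \<alpha> i) \<and> (\<exists>i\<in>I. 0 < \<alpha> i) \<and> (\<forall>u\<in>N0. (\<Sum>i\<in>I. \<alpha> i * u i) \<le> 0)"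
    proof (rule insert.IH)
      fix u v assume "u \<in> N0" "v \<in> N0"
      then have "(\<lambda>i. (u(x:=0)) i + (v(x:=0)) i) \<in> N" using insert.prems(1) unfolding N0_def by blast
      moreover have "(\<lambda>i. (u(x:=0)) i + (v(x:=0)) i) = (\<lambda>i. u i + v i)(x := 0)" by auto
      ultimately show "(\<lambda>i. u i + v i) \<in> N0" unfolding N0_def by simp
    next
      fix u and c :: real assume "u \<in> N0" "0 < c"
      then have "(\<lambda>i. c * (u(x:=0)) i) \<in> N" using insert.prems(2) unfolding N0_def by blast
      moreover have "(\<lambda>i. c * (u(x:=0)) i) = (\<lambda>i. c * u i)(x := 0)" by auto
      ultimately show "(\<lambda>i. c * u i) \<in> N0" unfolding N0_def by simp
    next
      fix u v assume "u \<in> N0" "\<And>i. i \<in> I \<Longrightarrow> v i \<le> u i"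
      then have "\<And>i. i \<in> insert x I \<Longrightarrow> (v(x:=0)) i \<le> (u(x:=0)) i" by auto
      then show "v \<in> N0" unfolding N0_def using insert.prems(3)[of "u(x:=0)" "v(x:=0)"] \<open>u \<in> N0\<close>
        unfolding N0_def by blast
    next
      fix u assume "u \<in> N0" "\<And>i. i \<in> I \<Longrightarrow> 0 \<le> u i"
      then have "\<And>i. i \<in> insert x I \<Longrightarrow> 0 \<le> (u(x:=0)) i" by auto
      then have "\<forall>i\<in>insert x I. (u(x:=0)) i = 0"
        using insert.prems(4)[of "u(x:=0)"] \<open>u \<in> N0\<close> unfolding N0_def by blast
      then show "\<forall>i\<in>I. u i = 0" using xI by (metis fun_upd_other insertCI)
    qed
    then obtain \<alpha> where al: "\<forall>i\<in>I. 0 \<le> \<alpha> i" "\<exists>i\<in>I. 0 < \<alpha> i" "\<forall>u\<in>N0. (\<Sum>i\<in>I. \<alpha> i * u i) \<le> 0"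
      by blast
    define S where "S u = (\<Sum>i\<in>I. \<alpha> i * u i)" for u :: "nat \<Rightarrow> real"
    have Supd: "S (u(x:=0)) = S u" for u
      unfolding S_def using xI by (intro sum.cong) auto
    have S0: "S u \<le> 0" if "u \<in> N" "u x = 0" for u
    proof -
      have "u(x:=0) = u" using that(2) by auto
      then have "u \<in> N0" using that(1) unfolding N0_def by simp
      then show ?thesis using al(3) unfolding S_def by blast
    qed
    have SB: "S u \<le> 0" if "u \<in> N" "0 < u x" for u
    proof -
      have "\<And>i. i \<in> insert x I \<Longrightarrow> (u(x:=0)) i \<le> u i" using that(2) by auto
      then have "u(x:=0) \<in> N" using insert.prems(3)[OF that(1), of "u(x:=0)"] by blast
      then have "S ((u(x:=0))) \<le> 0" using S0 by simp
      then show ?thesis using Supd by simp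
    qed
    have SA: "S v / (- v x) \<le> - S u / u x" if "u \<in> N" "0 < u x" "v \<in> N" "v x < 0" for u v
    proof -
      define w where "w = (\<lambda>i. (\<lambda>i. u x * v i) i + (\<lambda>i. (- v x) * u i) i)"
      have "(\<lambda>i. u x * v i) \<in> N" using insert.prems(2) that by blast
      moreover have "(\<lambda>i. (- v x) * u i) \<in> N" using insert.prems(2)[of u "- v x"] that by linarith
      ultimately have "w \<in> N" unfolding w_def using insert.prems(1) by blast
      moreover have "w x = 0" unfolding w_def by simp
      ultimately have "S w \<le> 0" using S0 by blast
      moreover have "S w = u x * S v + (- v x) * S u"
      proof -
        have "S w = (\<Sum>i\<in>I. u x * (\<alpha> i * v i) + (- v x) * (\<alpha> i * u i))"
          unfolding S_def w_def by (intro sum.cong) (auto simp: algebra_simps)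
        also have "\<dots> = u x * S v + (- v x) * S u"
          unfolding S_def by (simp only: sum.distrib sum_distrib_left)
        finally show ?thesis .
      qed
      ultimately have "u x * S v + (- v x) * S u \<le> 0" by simp
      then show ?thesis using that(2,4) by (simp add: field_simps)
    qed
    define L where "L = insert 0 {S v / (- v x) | v. v \<in> N \<and> v x < 0}"
    have Lb: "y \<le> - S u / u x" if "y \<in> L" "u \<in> N" "0 < u x" for y u
      using that SA SB unfolding L_def by (auto simp: divide_nonpos_pos)
    have bdd: "bdd_above L" using Lb u0 by (auto intro!: bdd_aboveI)
    define a where "a = Sup L"
    have a0: "0 \<le> a" unfolding a_def L_def using bdd L_def by (intro cSup_upper) auto
    show ?thesis
    proof (intro exI[of _ "\<alpha>(x := a)"] conjI ballI)
      fix i assume "i \<in> insert x I" then show "0 \<le> (\<alpha>(x := a)) i" using al(1) a0 by auto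
    next
      show "\<exists>i\<in>insert x I. 0 < (\<alpha>(x := a)) i" using al(2) xI by (metis fun_upd_other insertCI)
    next
      fix u assume u: "u \<in> N"
      have eq: "(\<Sum>i\<in>insert x I. (\<alpha>(x := a)) i * u i) = a * u x + S u"
        using xI insert.hyps(1) unfolding S_def by (simp add: sum.insert) (intro sum.cong, auto)
      consider "0 < u x" | "u x = 0" | "u x < 0" by linarith
      then show "(\<Sum>i\<in>insert x I. (\<alpha>(x := a)) i * u i) \<le> 0"
      proof cases
        case 1
        have "a \<le> - S u / u x" unfolding a_def L_def
          by (rule cSup_least) (use Lb[OF _ u 1] L_def in auto)
        then have "a * u x \<le> - S u" using 1 by (simp add: field_simps)
        then show ?thesis using eq by simp
      next
        case 2 then show ?thesis using eq S0 u by simp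
      next
        case 3
        have "S u / (- u x) \<le> a" unfolding a_def
          by (rule cSup_upper) (use bdd u 3 L_def in auto)
        then have "S u \<le> a * (- u x)" using 3 by (simp add: field_simps)
        then show ?thesis using eq by (simp add: algebra_simps)
      qed
    qed
  qed
qed



context
  fixes D :: "('x \<Rightarrow> real) set"
  assumes coh: "coherent_D D"
begin

lemma cohD_parts: "D \<subseteq> gambles"
     "\<forall>f\<in>gambles. (\<forall>x. 0 \<le> f x) \<and> f \<noteq> (\<lambda>x. 0) \<longrightarrow> f \<in> D"
     "\<forall>f\<in>D. \<forall>lam::real. 0 < lam \<longrightarrow> (\<lambda>x. lam * f x) \<in> D"
     "\<forall>f\<in>D. \<forall>g\<in>D. (\<lambda>x. f x + g x) \<in> D"
     "\<forall>f\<in>gambles. (\<forall>x. f x \<le> 0) \<longrightarrow> f \<notin> D"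
  using coh unfolding coherent_D_def by simp_all

lemma cohD_gamble: "f \<in> D \<Longrightarrow> gamble f"
  using cohD_parts(1) unfolding gambles_def by auto

lemma cohD_pos: "gamble f \<Longrightarrow> (\<forall>x. 0 \<le> f x) \<Longrightarrow> f \<noteq> (\<lambda>x. 0) \<Longrightarrow> f \<in> D"
  using cohD_parts(2) unfolding gambles_def by simp

lemma cohD_scale: "f \<in> D \<Longrightarrow> 0 < c \<Longrightarrow> (\<lambda>x. c * f x) \<in> D"
  using cohD_parts(3) by simp

lemma cohD_add: "f \<in> D \<Longrightarrow> g \<in> D \<Longrightarrow> (\<lambda>x. f x + g x) \<in> D"
  using cohD_parts(4) by simp

lemma cohD_nonpos: "f \<in> D \<Longrightarrow> \<forall>x. f x \<le> 0 \<Longrightarrow> False"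
proof -
  assume a: "f \<in> D" "\<forall>x. f x \<le> 0"
  then have "f \<in> gambles" using cohD_gamble unfolding gambles_def by simp
  then show False using cohD_parts(5) a by blast
qed

lemma cohD_zero: "(\<lambda>x. 0) \<notin> D"
proof
  assume "(\<lambda>x. 0) \<in> D"
  then show False using cohD_nonpos[of "\<lambda>x. 0"] by simp
qed

lemma cohD_mono: "d \<in> D \<Longrightarrow> gamble f \<Longrightarrow> (\<And>x. d x \<le> f x) \<Longrightarrow> f \<in> D"
proof -
  assume d: "d \<in> D" "gamble f" "\<And>x. d x \<le> f x"
  show "f \<in> D"
  proof (cases "f = d")
    case True then show ?thesis using d by simp
  next
    case False
    have g: "gamble (\<lambda>x. f x - d x)" using d cohD_gamble gamble_diff by blast
    have "(\<lambda>x. f x - d x) \<noteq> (\<lambda>x. 0)"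
    proof
      assume "(\<lambda>x. f x - d x) = (\<lambda>x. 0)"
      then have "\<And>x. f x = d x" by (metis eq_iff_diff_eq_0)
      then show False using False by auto
    qed
    then have "(\<lambda>x. f x - d x) \<in> D" using cohD_pos[OF g] d(3) by simp
    from cohD_add[OF d(1) this] show ?thesis by simp
  qed
qed

definition Dp :: "('x \<Rightarrow> real) set" where
  "Dp = D \<union> {f. gamble f \<and> (\<forall>x. 0 \<le> f x)}"

lemma Dp_gamble: "u \<in> Dp \<Longrightarrow> gamble u"
  unfolding Dp_def using cohD_gamble by blast

lemma Dp_nonneg: "gamble u \<Longrightarrow> (\<And>x. 0 \<le> u x) \<Longrightarrow> u \<in> Dp"
  unfolding Dp_def by blast

lemma Dp_mono: "u \<in> Dp \<Longrightarrow> gamble f \<Longrightarrow> (\<And>x. u x \<le> f x) \<Longrightarrow> f \<in> Dp"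
proof -
  assume a: "u \<in> Dp" "gamble f" "\<And>x. u x \<le> f x"
  show "f \<in> Dp"
  proof (cases "u \<in> D")
    case True then show ?thesis using cohD_mono[OF True a(2,3)] unfolding Dp_def by blast
  next
    case False
    then have "\<forall>x. 0 \<le> u x" using a(1) unfolding Dp_def by blast
    then have "\<forall>x. 0 \<le> f x" using a(3) order_trans by blast
    then show ?thesis using a(2) unfolding Dp_def by blast
  qed
qed

lemma Dp_add: "u \<in> Dp \<Longrightarrow> v \<in> Dp \<Longrightarrow> (\<lambda>x. u x + v x) \<in> Dp"
proof -
  assume u: "u \<in> Dp" and v: "v \<in> Dp"
  show ?thesis
  proof (cases "u \<in> D")
    case True
    show ?thesis
    proof (cases "v \<in> D")
      case True then show ?thesis using \<open>u \<in> D\<close> cohD_add unfolding Dp_def by blast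
    next
      case False
      then have "\<forall>x. 0 \<le> v x" using v unfolding Dp_def by blast
      then show ?thesis using Dp_mono[OF u gamble_add[OF Dp_gamble[OF u] Dp_gamble[OF v]]] by simp
    qed
  next
    case False
    then have "\<forall>x. 0 \<le> u x" using u unfolding Dp_def by blast
    then show ?thesis using Dp_mono[OF v gamble_add[OF Dp_gamble[OF u] Dp_gamble[OF v]]] by simp
  qed
qed

lemma Dp_scale: "u \<in> Dp \<Longrightarrow> 0 < c \<Longrightarrow> (\<lambda>x. c * u x) \<in> Dp"
  unfolding Dp_def using cohD_scale gamble_scale by auto

lemma Dp_nonpos: "u \<in> Dp \<Longrightarrow> (\<And>x. u x \<le> 0) \<Longrightarrow> u x = 0"
proof -
  assume a: "u \<in> Dp" "\<And>x. u x \<le> 0"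
  have "u \<notin> D" using cohD_nonpos a(2) by blast
  then have "0 \<le> u x" using a(1) unfolding Dp_def by blast
  then show "u x = 0" using a(2)[of x] by simp
qed

lemma Dp_sum_nonzero: "u \<in> Dp \<Longrightarrow> v \<in> Dp \<Longrightarrow> u \<noteq> (\<lambda>x. 0) \<Longrightarrow> (\<lambda>x. u x + v x) \<noteq> (\<lambda>x. 0)"
proof
  assume u: "u \<in> Dp" and v: "v \<in> Dp" and nz: "u \<noteq> (\<lambda>x. 0)" and s: "(\<lambda>x. u x + v x) = (\<lambda>x. 0)"
  then have vu: "\<And>x. v x = - u x" by (metis add_eq_0_iff)
  have "(\<lambda>x. u x + v x) \<in> Dp" using Dp_add[OF u v] .
  show False
  proof (cases "u \<in> D")
    case True
    show False
    proof (cases "v \<in> D")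
      case True
      then show False using cohD_add[OF \<open>u \<in> D\<close> True] s cohD_zero by simp
    next
      case False
      then have "\<forall>x. 0 \<le> v x" using v unfolding Dp_def by blast
      then have "\<forall>x. u x \<le> 0" using vu by (metis neg_0_le_iff_le)
      then show False using cohD_nonpos[OF \<open>u \<in> D\<close>] by blast
    qed
  next
    case False
    then have un: "\<forall>x. 0 \<le> u x" using u unfolding Dp_def by blast
    then have "\<forall>x. v x \<le> 0" using vu by simp
    then have "\<And>x. v x = 0" using Dp_nonpos[OF v] by blast
    then have "\<And>x. u x = 0" using vu by (metis neg_0_equal_iff_equal)
    then show False using nz by auto
  qed
qed

lemma sumD: "finite I \<Longrightarrow> (\<And>j. j \<in> I \<Longrightarrow> 0 \<le> \<alpha> j \<and> f j \<in> D) \<Longrightarrow> \<exists>j\<in>I. 0 < \<alpha> j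
   \<Longrightarrow> (\<lambda>x. \<Sum>j\<in>I. \<alpha> j * f j x) \<in> D"
proof (induction I rule: finite_induct)
  case empty then show ?case by simp
next
  case (insert a I)
  have eq: "(\<lambda>x. \<Sum>j\<in>insert a I. \<alpha> j * f j x) = (\<lambda>x. \<alpha> a * f a x + (\<Sum>j\<in>I. \<alpha> j * f j x))"
    using insert.hyps by simp
  show ?case
  proof (cases "\<exists>j\<in>I. 0 < \<alpha> j")
    case True
    then have IH: "(\<lambda>x. \<Sum>j\<in>I. \<alpha> j * f j x) \<in> D" using insert by blast
    show ?thesis
    proof (cases "0 < \<alpha> a")
      case True
      have "(\<lambda>x. \<alpha> a * f a x) \<in> D" using cohD_scale True insert.prems(1)[of a] by simp
      from cohD_add[OF this IH] show ?thesis using eq by simp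
    next
      case False
      then have "\<alpha> a = 0" using insert.prems(1)[of a] by simp
      then show ?thesis using eq IH by simp
    qed
  next
    case False
    have z: "\<alpha> j = 0" if "j \<in> I" for j
    proof -
      have "0 \<le> \<alpha> j" using insert.prems(1)[of j] that by simp
      moreover have "\<not> 0 < \<alpha> j" using False that by blast
      ultimately show ?thesis by simp
    qed
    then have "0 < \<alpha> a" using insert.prems(2) by auto
    then have "(\<lambda>x. \<alpha> a * f a x) \<in> D" using cohD_scale insert.prems(1)[of a] by simp
    moreover have "\<And>x. (\<Sum>j\<in>I. \<alpha> j * f j x) = 0" using z by simp
    ultimately show ?thesis using eq by simp
  qed
qed

lemma cone_sets:
  assumes "Bl \<noteq> []" "\<And>B. B \<in> set Bl \<Longrightarrow> B \<noteq> {}"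
  shows "\<exists>\<alpha>. (\<forall>i<length Bl. 0 \<le> \<alpha> i) \<and> (\<exists>i<length Bl. 0 < \<alpha> i) \<and>
    (\<forall>v. (\<lambda>x2. - (\<Sum>j<length Bl. v j * indicator (Bl!j) x2)) \<in> Dp \<longrightarrow> (\<Sum>i<length Bl. \<alpha> i * v i) \<le> 0)"
proof -
  define F where "F v = (\<lambda>x2. - (\<Sum>j<length Bl. v j * indicator (Bl!j) x2))" for v :: "nat \<Rightarrow> real"
  have gF: "gamble (F v)" for v
    unfolding F_def by (intro gamble_neg gamble_sum) (auto intro: gamble_indicator)
  have "\<exists>\<alpha>. (\<forall>i\<in>{..<length Bl}. 0 \<le> \<alpha> i) \<and> (\<exists>i\<in>{..<length Bl}. 0 < \<alpha> i) \<and>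
        (\<forall>u\<in>{v. F v \<in> Dp}. (\<Sum>i\<in>{..<length Bl}. \<alpha> i * u i) \<le> 0)"
  proof (rule cone_sep)
    show "{..<length Bl} \<noteq> {}" using assms(1) by auto
  next
    fix u v assume "u \<in> {v. F v \<in> Dp}" "v \<in> {v. F v \<in> Dp}"
    then have "(\<lambda>x. F u x + F v x) \<in> Dp" using Dp_add by blast
    moreover have "(\<lambda>x. F u x + F v x) = F (\<lambda>i. u i + v i)"
      unfolding F_def by (simp add: distrib_right sum.distrib)
    ultimately show "(\<lambda>i. u i + v i) \<in> {v. F v \<in> Dp}" by simp
  next
    fix u and c :: real assume "u \<in> {v. F v \<in> Dp}" "0 < c"
    then have "(\<lambda>x. c * F u x) \<in> Dp" using Dp_scale by blast
    moreover have "(\<lambda>x. c * F u x) = F (\<lambda>i. c * u i)"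
      unfolding F_def by (simp add: sum_distrib_left mult.assoc)
    ultimately show "(\<lambda>i. c * u i) \<in> {v. F v \<in> Dp}" by simp
  next
    fix u v assume u: "u \<in> {v. F v \<in> Dp}" and le: "\<And>i. i \<in> {..<length Bl} \<Longrightarrow> v i \<le> u i"
    have "F u x \<le> F v x" for x
    proof -
      have "(\<Sum>j<length Bl. v j * indicator (Bl!j) x) \<le> (\<Sum>j<length Bl. u j * indicator (Bl!j) x)"
        by (intro sum_mono mult_right_mono) (simp_all add: le)
      then show ?thesis unfolding F_def by simp
    qed
    then show "v \<in> {v. F v \<in> Dp}" using Dp_mono[OF _ gF] u by blast
  next
    fix u assume u: "u \<in> {v. F v \<in> Dp}" and nn: "\<And>i. i \<in> {..<length Bl} \<Longrightarrow> 0 \<le> u i"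
    have le0: "F u x \<le> 0" for x
    proof -
      have "0 \<le> (\<Sum>j<length Bl. u j * indicator (Bl!j) x)"
        by (intro sum_nonneg mult_nonneg_nonneg) (simp_all add: nn)
      then show ?thesis unfolding F_def by simp
    qed
    have z: "F u x = 0" for x using Dp_nonpos[of "F u" x] u le0 by blast
    show "\<forall>i\<in>{..<length Bl}. u i = 0"
    proof
      fix i assume i: "i \<in> {..<length Bl}"
      then have "Bl!i \<noteq> {}" using assms(2) nth_mem by auto
      then obtain x where x: "x \<in> Bl!i" by blast
      have "u i * indicator (Bl!i) x \<le> (\<Sum>j<length Bl. u j * indicator (Bl!j) x)"
        using i nn by (intro member_le_sum) (auto simp: indicator_def)
      then have "u i \<le> - F u x" using x unfolding F_def by simp
      then show "u i = 0" using z[of x] nn[OF i] by simp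
    qed
  qed simp
  then obtain \<alpha> where "(\<forall>i\<in>{..<length Bl}. 0 \<le> \<alpha> i)" "(\<exists>i\<in>{..<length Bl}. 0 < \<alpha> i)"
        "(\<forall>u\<in>{v. F v \<in> Dp}. (\<Sum>i\<in>{..<length Bl}. \<alpha> i * u i) \<le> 0)" by blast
  then show ?thesis unfolding F_def lessThan_iff mem_Collect_eq by blast
qed

end



definition Rep :: "('a \<Rightarrow> real) set \<Rightarrow> ('b \<Rightarrow> real) set \<Rightarrow> ('a \<Rightarrow> 'b \<Rightarrow> real) \<Rightarrow> bool" where
  "Rep D1 D2 h \<longleftrightarrow> (\<exists>L \<Phi>.
     (\<forall>x1 x2. h x1 x2 = \<Phi> x1 x2 + (\<Sum>j<length L. fst (L!j) x1 * indicator (snd (L!j)) x2)) \<and>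
     (\<forall>p\<in>set L. fst p \<in> D1 \<and> snd p \<noteq> {}) \<and>
     (\<forall>x1. \<Phi> x1 \<in> Dp D2) \<and>
     (L \<noteq> [] \<or> (\<exists>x1. \<Phi> x1 \<noteq> (\<lambda>_. 0))))"

lemma RepI:
  assumes "\<And>x1 x2. h x1 x2 = \<Phi> x1 x2 + (\<Sum>j<length L. fst (L!j) x1 * indicator (snd (L!j)) x2)"
    "\<And>p. p \<in> set L \<Longrightarrow> fst p \<in> D1 \<and> snd p \<noteq> {}"
    "\<And>x1. \<Phi> x1 \<in> Dp D2"
    "L \<noteq> [] \<or> (\<exists>x1. \<Phi> x1 \<noteq> (\<lambda>_. 0))"
  shows "Rep D1 D2 h"
  unfolding Rep_def using assms by blast

lemma Rep_add:
  assumes c1: "coherent_D D1" and c2: "coherent_D D2"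
    and r1: "Rep D1 D2 h1" and r2: "Rep D1 D2 h2"
  shows "Rep D1 D2 (\<lambda>x1 x2. h1 x1 x2 + h2 x1 x2)"
proof -
  obtain L1 \<Phi>1 where A: "\<forall>x1 x2. h1 x1 x2 = \<Phi>1 x1 x2 + (\<Sum>j<length L1. fst (L1!j) x1 * indicator (snd (L1!j)) x2)"
    "\<forall>p\<in>set L1. fst p \<in> D1 \<and> snd p \<noteq> {}" "\<forall>x1. \<Phi>1 x1 \<in> Dp D2" "L1 \<noteq> [] \<or> (\<exists>x1. \<Phi>1 x1 \<noteq> (\<lambda>_. 0))"
    using r1 unfolding Rep_def by blast
  obtain L2 \<Phi>2 where B: "\<forall>x1 x2. h2 x1 x2 = \<Phi>2 x1 x2 + (\<Sum>j<length L2. fst (L2!j) x1 * indicator (snd (L2!j)) x2)"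
    "\<forall>p\<in>set L2. fst p \<in> D1 \<and> snd p \<noteq> {}" "\<forall>x1. \<Phi>2 x1 \<in> Dp D2" "L2 \<noteq> [] \<or> (\<exists>x1. \<Phi>2 x1 \<noteq> (\<lambda>_. 0))"
    using r2 unfolding Rep_def by blast
  show ?thesis
  proof (rule RepI[where L = "L1 @ L2" and \<Phi> = "\<lambda>x1 x2. \<Phi>1 x1 x2 + \<Phi>2 x1 x2"])
    fix x1 :: 'a and x2 :: 'b
    let ?T = "\<lambda>L j. fst (L!j) x1 * indicator (snd (L!j)) x2"
    have "(\<Sum>j<length (L1 @ L2). ?T (L1 @ L2) j) = (\<Sum>j<length L1. ?T (L1 @ L2) j) + (\<Sum>j<length L2. ?T (L1 @ L2) (length L1 + j))"
      using sum_concat_nat[of "?T (L1 @ L2)" "length L1" "length L2"] by simp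
    also have "(\<Sum>j<length L1. ?T (L1 @ L2) j) = (\<Sum>j<length L1. ?T L1 j)"
      by (intro sum.cong) (auto simp: nth_append)
    also have "(\<Sum>j<length L2. ?T (L1 @ L2) (length L1 + j)) = (\<Sum>j<length L2. ?T L2 j)"
      by (intro sum.cong) auto
    finally show "h1 x1 x2 + h2 x1 x2 = \<Phi>1 x1 x2 + \<Phi>2 x1 x2 + (\<Sum>j<length (L1 @ L2). ?T (L1 @ L2) j)"
      using A(1) B(1) by simp
  next
    fix p assume "p \<in> set (L1 @ L2)" then show "fst p \<in> D1 \<and> snd p \<noteq> {}" using A(2) B(2) by auto
  next
    fix x1 show "(\<lambda>x2. \<Phi>1 x1 x2 + \<Phi>2 x1 x2) \<in> Dp D2" using Dp_add[OF c2] A(3) B(3) by blast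
  next
    show "L1 @ L2 \<noteq> [] \<or> (\<exists>x1. (\<lambda>x2. \<Phi>1 x1 x2 + \<Phi>2 x1 x2) \<noteq> (\<lambda>_. 0))"
    proof (cases "L1 @ L2 = []")
      case True
      then obtain x1 where "\<Phi>1 x1 \<noteq> (\<lambda>_. 0)" using A(4) by auto
      then have "(\<lambda>x2. \<Phi>1 x1 x2 + \<Phi>2 x1 x2) \<noteq> (\<lambda>_. 0)"
        using Dp_sum_nonzero[OF c2, of "\<Phi>1 x1" "\<Phi>2 x1"] A(3) B(3) by blast
      then show ?thesis by blast
    qed simp
  qed
qed

lemma Rep_scale:
  assumes c1: "coherent_D D1" and c2: "coherent_D D2"
    and r: "Rep D1 D2 h" and c: "0 < c"
  shows "Rep D1 D2 (\<lambda>x1 x2. c * h x1 x2)"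
proof -
  obtain L \<Phi> where A: "\<forall>x1 x2. h x1 x2 = \<Phi> x1 x2 + (\<Sum>j<length L. fst (L!j) x1 * indicator (snd (L!j)) x2)"
    "\<forall>p\<in>set L. fst p \<in> D1 \<and> snd p \<noteq> {}" "\<forall>x1. \<Phi> x1 \<in> Dp D2" "L \<noteq> [] \<or> (\<exists>x1. \<Phi> x1 \<noteq> (\<lambda>_. 0))"
    using r unfolding Rep_def by blast
  show ?thesis
  proof (rule RepI[where L = "map (\<lambda>p. ((\<lambda>x. c * fst p x), snd p)) L" and \<Phi> = "\<lambda>x1 x2. c * \<Phi> x1 x2"])
    fix x1 x2
    have "c * (\<Sum>j<length L. fst (L!j) x1 * indicator (snd (L!j)) x2)
       = (\<Sum>j<length L. (c * fst (L!j) x1) * indicator (snd (L!j)) x2)"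
      by (simp add: sum_distrib_left mult.assoc)
    then show "c * h x1 x2 = c * \<Phi> x1 x2 + (\<Sum>j<length (map (\<lambda>p. ((\<lambda>x. c * fst p x), snd p)) L).
         fst (map (\<lambda>p. ((\<lambda>x. c * fst p x), snd p)) L ! j) x1 * indicator (snd (map (\<lambda>p. ((\<lambda>x. c * fst p x), snd p)) L ! j)) x2)"
      using A(1) by (simp add: distrib_left)
  next
    fix p assume "p \<in> set (map (\<lambda>p. ((\<lambda>x. c * fst p x), snd p)) L)"
    then obtain q where "q \<in> set L" "p = ((\<lambda>x. c * fst q x), snd q)" by auto
    then show "fst p \<in> D1 \<and> snd p \<noteq> {}" using A(2) cohD_scale[OF c1 _ c] by auto
  next
    fix x1 show "(\<lambda>x2. c * \<Phi> x1 x2) \<in> Dp D2" using Dp_scale[OF c2 _ c] A(3) by blast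
  next
    show "map (\<lambda>p. ((\<lambda>x. c * fst p x), snd p)) L \<noteq> [] \<or> (\<exists>x1. (\<lambda>x2. c * \<Phi> x1 x2) \<noteq> (\<lambda>_. 0))"
    proof (cases "L = []")
      case True
      then obtain x1 x2 where "\<Phi> x1 x2 \<noteq> 0" using A(4) by fastforce
      then have "(\<lambda>x2. c * \<Phi> x1 x2) \<noteq> (\<lambda>_. 0)" using c by (metis mult_eq_0_iff order_less_irrefl)
      then show ?thesis by blast
    qed simp
  qed
qed

lemma Rep_nonpos:
  assumes c1: "coherent_D D1" and c2: "coherent_D D2"
    and r: "Rep D1 D2 h" and le: "\<And>x1 x2. h x1 x2 \<le> 0"
  shows False
proof -
  obtain L \<Phi> where A: "\<forall>x1 x2. h x1 x2 = \<Phi> x1 x2 + (\<Sum>j<length L. fst (L!j) x1 * indicator (snd (L!j)) x2)"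
    "\<forall>p\<in>set L. fst p \<in> D1 \<and> snd p \<noteq> {}" "\<forall>x1. \<Phi> x1 \<in> Dp D2" "L \<noteq> [] \<or> (\<exists>x1. \<Phi> x1 \<noteq> (\<lambda>_. 0))"
    using r unfolding Rep_def by blast
  have gL: "gamble (fst (L!j))" if "j < length L" for j
    using A(2) nth_mem[OF that] cohD_gamble[OF c1] by blast
  show False
  proof (cases "L = []")
    case True
    then obtain x1 where x1: "\<Phi> x1 \<noteq> (\<lambda>_. 0)" using A(4) by blast
    have "\<Phi> x1 x2 \<le> 0" for x2 using le[of x1 x2] A(1) True by simp
    then have "\<Phi> x1 x2 = 0" for x2 using Dp_nonpos[OF c2, of "\<Phi> x1"] A(3) by blast
    then show False using x1 by auto
  next
    case False
    define Bl where "Bl = map snd L"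
    have "Bl \<noteq> []" using False Bl_def by simp
    moreover have "\<And>B. B \<in> set Bl \<Longrightarrow> B \<noteq> {}" using A(2) Bl_def by auto
    ultimately obtain \<alpha> where al: "\<forall>i<length Bl. 0 \<le> \<alpha> i" "\<exists>i<length Bl. 0 < \<alpha> i"
       "\<forall>v. (\<lambda>x2. - (\<Sum>j<length Bl. v j * indicator (Bl!j) x2)) \<in> Dp D2 \<longrightarrow> (\<Sum>i<length Bl. \<alpha> i * v i) \<le> 0"
      using cone_sets[OF c2] by blast
    have S: "(\<Sum>i<length L. \<alpha> i * fst (L!i) x1) \<le> 0" for x1
    proof -
      let ?F = "\<lambda>x2. - (\<Sum>j<length L. fst (L!j) x1 * indicator (snd (L!j)) x2)"
      have "?F \<in> Dp D2"
      proof (rule Dp_mono[OF c2])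
        show "\<Phi> x1 \<in> Dp D2" using A(3) by blast
        show "gamble ?F" by (intro gamble_neg gamble_sum gamble_indicator) simp
        fix x2 show "\<Phi> x1 x2 \<le> ?F x2" using le[of x1 x2] A(1) by simp
      qed
      then show ?thesis using al(3)[rule_format, of "\<lambda>j. fst (L!j) x1"] unfolding Bl_def by simp
    qed
    have "(\<lambda>x. \<Sum>i\<in>{..<length L}. \<alpha> i * fst (L!i) x) \<in> D1"
      using al(1,2) A(2) unfolding Bl_def by (intro sumD[OF c1]) auto
    then show False using cohD_nonpos[OF c1] S by blast
  qed
qed

lemma Rep_le:
  assumes c1: "coherent_D D1" and c2: "coherent_D D2"
    and r: "Rep D1 D2 h" and le: "\<And>x1 x2. h x1 x2 \<le> g x1 * indicator B x2"
    and B: "B \<noteq> {}" and g: "gamble g"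
  shows "g \<in> D1"
proof (cases "g = (\<lambda>_. 0)")
  case True
  then have "h x1 x2 \<le> 0" for x1 x2 using le[of x1 x2] by simp
  then show ?thesis using Rep_nonpos[OF c1 c2 r] by blast
next
  case gnz: False
  obtain L \<Phi> where A: "\<forall>x1 x2. h x1 x2 = \<Phi> x1 x2 + (\<Sum>j<length L. fst (L!j) x1 * indicator (snd (L!j)) x2)"
    "\<forall>p\<in>set L. fst p \<in> D1 \<and> snd p \<noteq> {}" "\<forall>x1. \<Phi> x1 \<in> Dp D2" "L \<noteq> [] \<or> (\<exists>x1. \<Phi> x1 \<noteq> (\<lambda>_. 0))"
    using r unfolding Rep_def by blast
  have gL: "gamble (fst (L!j))" if "j < length L" for j
    using A(2) nth_mem[OF that] cohD_gamble[OF c1] by blast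
  define n where "n = length L"
  define Bl where "Bl = map snd L @ [B]"
  have lBl: "length Bl = Suc n" unfolding Bl_def n_def by simp
  have Bln: "Bl ! n = B" unfolding Bl_def n_def by (simp add: nth_append)
  have Blj: "Bl ! j = snd (L!j)" if "j < n" for j unfolding Bl_def using that n_def by (simp add: nth_append)
  have "Bl \<noteq> []" using Bl_def by simp
  moreover have "\<And>B'. B' \<in> set Bl \<Longrightarrow> B' \<noteq> {}" using A(2) B Bl_def by auto
  ultimately obtain \<alpha> where al: "\<forall>i<length Bl. 0 \<le> \<alpha> i" "\<exists>i<length Bl. 0 < \<alpha> i"
     "\<forall>v. (\<lambda>x2. - (\<Sum>j<length Bl. v j * indicator (Bl!j) x2)) \<in> Dp D2 \<longrightarrow> (\<Sum>i<length Bl. \<alpha> i * v i) \<le> 0"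
    using cone_sets[OF c2] by blast
  define S where "S x1 = (\<Sum>i<n. \<alpha> i * fst (L!i) x1)" for x1
  have Sle: "S x1 \<le> \<alpha> n * g x1" for x1
  proof -
    define v where "v j = (if j < n then fst (L!j) x1 else - g x1)" for j
    have sv: "(\<Sum>j<length Bl. v j * indicator (Bl!j) x2)
        = (\<Sum>j<n. fst (L!j) x1 * indicator (snd (L!j)) x2) + (- g x1) * indicator B x2" for x2
    proof -
      have "(\<Sum>j<length Bl. v j * indicator (Bl!j) x2) = (\<Sum>j<n. v j * indicator (Bl!j) x2) + v n * indicator (Bl!n) x2"
        unfolding lBl by simp
      also have "(\<Sum>j<n. v j * indicator (Bl!j) x2) = (\<Sum>j<n. fst (L!j) x1 * indicator (snd (L!j)) x2)"
        by (intro sum.cong) (auto simp: v_def Blj)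
      finally show ?thesis by (simp add: v_def Bln)
    qed
    have sa: "(\<Sum>i<length Bl. \<alpha> i * v i) = S x1 - \<alpha> n * g x1"
    proof -
      have "(\<Sum>i<length Bl. \<alpha> i * v i) = (\<Sum>i<n. \<alpha> i * v i) + \<alpha> n * v n"
        unfolding lBl by simp
      also have "(\<Sum>i<n. \<alpha> i * v i) = S x1"
        unfolding S_def by (intro sum.cong) (auto simp: v_def)
      finally show ?thesis by (simp add: v_def)
    qed
    let ?F = "\<lambda>x2. - (\<Sum>j<length Bl. v j * indicator (Bl!j) x2)"
    have "?F \<in> Dp D2"
    proof (rule Dp_mono[OF c2])
      show "\<Phi> x1 \<in> Dp D2" using A(3) by blast
      have "gamble (\<lambda>x2. - ((\<Sum>j<n. fst (L!j) x1 * indicator (snd (L!j)) x2) + (- g x1) * indicator B x2))"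
        by (intro gamble_neg gamble_add gamble_sum gamble_indicator) simp
      then show "gamble ?F" unfolding sv .
      fix x2 show "\<Phi> x1 x2 \<le> ?F x2" using le[of x1 x2] A(1) unfolding sv n_def by simp
    qed
    then have "(\<Sum>i<length Bl. \<alpha> i * v i) \<le> 0" using al(3) by blast
    then show ?thesis using sa by simp
  qed
  have an: "0 \<le> \<alpha> n" using al(1) lBl by simp
  show ?thesis
  proof (cases "\<exists>i<n. 0 < \<alpha> i")
    case True
    have SD: "S \<in> D1"
    proof -
      have "(\<lambda>x. \<Sum>i\<in>{..<n}. \<alpha> i * fst (L!i) x) \<in> D1"
        using al(1) lBl True A(2) n_def by (intro sumD[OF c1]) auto
      then show ?thesis unfolding S_def[abs_def] by simp
    qed
    show ?thesis
    proof (cases "\<alpha> n = 0")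
      case True
      then show ?thesis using Sle cohD_nonpos[OF c1 SD] by simp
    next
      case False
      then have ap: "0 < \<alpha> n" using an by simp
      have "(\<lambda>x. (1 / \<alpha> n) * S x) \<in> D1" by (rule cohD_scale[OF c1 SD]) (use ap in simp)
      moreover have "(1 / \<alpha> n) * S x \<le> g x" for x
        using Sle[of x] ap by (simp add: field_simps)
      ultimately show ?thesis using cohD_mono[OF c1 _ g] by blast
    qed
  next
    case False
    have z: "\<alpha> i = 0" if "i < n" for i
    proof -
      have "0 \<le> \<alpha> i" using al(1) lBl that by simp
      moreover have "\<not> 0 < \<alpha> i" using False that by blast
      ultimately show ?thesis by simp
    qed
    then have "0 < \<alpha> n" using al(2) lBl by (metis less_Suc_eq order_less_irrefl)
    moreover have "S x = 0" for x unfolding S_def using z by simp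
    ultimately have "0 \<le> g x" for x using Sle[of x] by (simp add: zero_le_mult_iff)
    then show ?thesis using cohD_pos[OF c1 g] gnz by blast
  qed
qed



lemma natext_coherent:
  assumes c: "coherent_D D'" and A: "A \<subseteq> D'"
  shows "coherent_D (natext A)" "natext A \<subseteq> D'"
proof -
  show sub: "natext A \<subseteq> D'"
  proof
    fix h assume "h \<in> natext A"
    then show "h \<in> D'" unfolding natext_def
    proof (rule posi_induct)
      fix f assume "f \<in> A \<union> gambles_pos"
      then show "f \<in> D'" using A cohD_pos[OF c] unfolding gambles_pos_def by auto
    next
      fix f and c' :: real assume "f \<in> D'" "0 < c'" then show "(\<lambda>x. c' * f x) \<in> D'" using cohD_scale[OF c] by blast
    next
      fix f g assume "f \<in> D'" "g \<in> D'" then show "(\<lambda>x. f x + g x) \<in> D'" using cohD_add[OF c] by blast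
    qed
  qed
  show "coherent_D (natext A)"
    unfolding coherent_D_def
  proof (intro conjI ballI allI impI)
    show "natext A \<subseteq> gambles" using sub cohD_gamble[OF c] unfolding gambles_def by auto
  next
    fix f :: "'a \<Rightarrow> real" assume "f \<in> gambles" "(\<forall>x. 0 \<le> f x) \<and> f \<noteq> (\<lambda>x. 0)"
    then have "f \<in> gambles_pos" unfolding gambles_def gambles_pos_def by auto
    then show "f \<in> natext A" unfolding natext_def by (intro posi_single) auto
  next
    fix f and lam :: real assume "f \<in> natext A" "0 < lam"
    then show "(\<lambda>x. lam * f x) \<in> natext A" unfolding natext_def by (rule posi_scale)
  next
    fix f g assume "f \<in> natext A" "g \<in> natext A"
    then show "(\<lambda>x. f x + g x) \<in> natext A" unfolding natext_def by (rule posi_add)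
  next
    fix f :: "'a \<Rightarrow> real" assume "f \<in> gambles" "\<forall>x. f x \<le> 0"
    then show "f \<notin> natext A" using sub cohD_nonpos[OF c] by blast
  qed
qed

lemma gamble_cgamble: "gamble f \<Longrightarrow> gamble (cgamble f \<mu> B)"
  unfolding cgamble_def by (intro gamble_mult_indicator gamble_diff gamble_const)

lemma lp_strict:
  assumes c: "coherent_D D" and f: "gamble f" and lt: "ereal \<mu> < lowprev_D D f B"
  shows "cgamble f \<mu> B \<in> D"
proof -
  obtain y where "y \<in> {ereal \<mu>' | \<mu>'. cgamble f \<mu>' B \<in> D}" "ereal \<mu> < y"
    using lt unfolding lowprev_D_def less_Sup_iff by blast
  then obtain \<mu>' where m: "cgamble f \<mu>' B \<in> D" "\<mu> < \<mu>'" by auto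
  show ?thesis
  proof (rule cohD_mono[OF c m(1) gamble_cgamble[OF f]])
    fix x show "cgamble f \<mu>' B x \<le> cgamble f \<mu> B x"
      using m(2) unfolding cgamble_def by (auto simp: indicator_def)
  qed
qed

lemma natext_lp_props:
  assumes "coherent_lp C P"
  shows "coherent_D (natext_lp C P)" "\<And>f B. (f, B) \<in> C \<Longrightarrow> lowprev_D (natext_lp C P) f B = P f B"
proof -
  obtain D' where C: "C \<subseteq> Ccond" and c: "coherent_D D'" and PD: "\<forall>(f, B)\<in>C. P f B = lowprev_D D' f B"
    using assms unfolding coherent_lp_def by blast
  let ?A = "{cgamble f \<mu> B | f \<mu> B. (f, B) \<in> C \<and> ereal \<mu> < P f B}"
  have AD: "?A \<subseteq> D'"
  proof
    fix g assume "g \<in> ?A"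
    then obtain f \<mu> B where g: "g = cgamble f \<mu> B" "(f, B) \<in> C" "ereal \<mu> < P f B" by blast
    have "gamble f" using g(2) C unfolding Ccond_def by auto
    moreover have "ereal \<mu> < lowprev_D D' f B" using g(2,3) PD by auto
    ultimately show "g \<in> D'" using lp_strict[OF c] g(1) by blast
  qed
  show coh: "coherent_D (natext_lp C P)" unfolding natext_lp_def using natext_coherent[OF c AD] by blast
  have sub: "natext_lp C P \<subseteq> D'" unfolding natext_lp_def using natext_coherent[OF c AD] by blast
  fix f B assume fB: "(f, B) \<in> C"
  show "lowprev_D (natext_lp C P) f B = P f B"
  proof (rule antisym)
    have "lowprev_D (natext_lp C P) f B \<le> lowprev_D D' f B"
      unfolding lowprev_D_def using sub by (intro Sup_subset_mono) auto
    then show "lowprev_D (natext_lp C P) f B \<le> P f B" using PD fB by auto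
  next
    show "P f B \<le> lowprev_D (natext_lp C P) f B"
    proof (rule dense_le)
      fix y assume y: "y < P f B"
      show "y \<le> lowprev_D (natext_lp C P) f B"
      proof (cases y)
        case (real r)
        then have "cgamble f r B \<in> ?A" using fB y by blast
        then have "cgamble f r B \<in> natext_lp C P" unfolding natext_lp_def natext_def
          by (intro posi_single) auto
        then have "ereal r \<in> {ereal \<mu> | \<mu>. cgamble f \<mu> B \<in> natext_lp C P}" by blast
        then show ?thesis unfolding lowprev_D_def real by (rule Sup_upper)
      next
        case PInf then show ?thesis using y by simp
      next
        case MInf then show ?thesis by simp
      qed
    qed
  qed
qed


context
  fixes Bs1 :: "'a set set" and Bs2 :: "'b set set" and D1 :: "('a \<Rightarrow> real) set" and D2 :: "('b \<Rightarrow> real) set"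
  assumes c1: "coherent_D D1" and c2: "coherent_D D2" and e1: "{} \<notin> Bs1" and e2: "{} \<notin> Bs2"
begin

lemma prod_Rep:
  assumes "h \<in> prod_D Bs1 Bs2 D1 D2"
  shows "Rep D1 D2 (\<lambda>x1 x2. h (x1, x2)) \<and> Rep D2 D1 (\<lambda>x2 x1. h (x1, x2))"
  using assms unfolding prod_D_def natext_def
proof (rule posi_induct)
  fix f assume "f \<in> ({(\<lambda>x. cyl2 f2 x * indicator (cylset1 B1) x) | f2 B1. f2 \<in> D2 \<and> B1 \<in> Bs1 \<union> {UNIV}}
           \<union> {(\<lambda>x. cyl1 f1 x * indicator (cylset2 B2) x) | f1 B2. f1 \<in> D1 \<and> B2 \<in> Bs2 \<union> {UNIV}}) \<union> gambles_pos"
  then consider (a) f2 B1 where "f = (\<lambda>x. cyl2 f2 x * indicator (cylset1 B1) x)" "f2 \<in> D2" "B1 \<in> Bs1 \<union> {UNIV}"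
    | (b) f1 B2 where "f = (\<lambda>x. cyl1 f1 x * indicator (cylset2 B2) x)" "f1 \<in> D1" "B2 \<in> Bs2 \<union> {UNIV}"
    | (c) "f \<in> gambles_pos" by blast
  then show "Rep D1 D2 (\<lambda>x1 x2. f (x1, x2)) \<and> Rep D2 D1 (\<lambda>x2 x1. f (x1, x2))"
  proof cases
    case a
    have B1: "B1 \<noteq> {}" using a(3) e1 by auto
    have fx: "f (x1, x2) = f2 x2 * indicator B1 x1" for x1 x2
      using a(1) unfolding cyl2_def cylset1_def by (simp add: indicator_def)
    have g2: "gamble f2" using cohD_gamble[OF c2 a(2)] .
    have r1: "Rep D1 D2 (\<lambda>x1 x2. f (x1, x2))"
    proof (rule RepI[where L = "[]" and \<Phi> = "\<lambda>x1 x2. f2 x2 * indicator B1 x1"])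
      fix x1 show "(\<lambda>x2. f2 x2 * indicator B1 x1) \<in> Dp D2"
      proof (cases "x1 \<in> B1")
        case True then show ?thesis using a(2) unfolding Dp_def[OF c2] by simp
      next
        case False then show ?thesis using Dp_nonneg[OF c2 gamble_const] by simp
      qed
    next
      obtain x1 where "x1 \<in> B1" using B1 by blast
      then have "(\<lambda>x2. f2 x2 * indicator B1 x1) = f2" by (simp add: indicator_def)
      moreover have "f2 \<noteq> (\<lambda>_. 0)" using a(2) cohD_zero[OF c2] by blast
      ultimately show "[] \<noteq> [] \<or> (\<exists>x1. (\<lambda>x2. f2 x2 * indicator B1 x1) \<noteq> (\<lambda>_. 0))" by auto
    qed (auto simp: fx)
    have r2: "Rep D2 D1 (\<lambda>x2 x1. f (x1, x2))"
    proof (rule RepI[where L = "[(f2, B1)]" and \<Phi> = "\<lambda>x2 x1. 0"])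
      fix x2 show "(\<lambda>x1. 0) \<in> Dp D1" using Dp_nonneg[OF c1 gamble_const] by simp
    qed (use a(2) B1 in \<open>auto simp: fx\<close>)
    show ?thesis using r1 r2 by blast
  next
    case b
    have B2: "B2 \<noteq> {}" using b(3) e2 by auto
    have fx: "f (x1, x2) = f1 x1 * indicator B2 x2" for x1 x2
      using b(1) unfolding cyl1_def cylset2_def by (simp add: indicator_def)
    have r2: "Rep D2 D1 (\<lambda>x2 x1. f (x1, x2))"
    proof (rule RepI[where L = "[]" and \<Phi> = "\<lambda>x2 x1. f1 x1 * indicator B2 x2"])
      fix x2 show "(\<lambda>x1. f1 x1 * indicator B2 x2) \<in> Dp D1"
      proof (cases "x2 \<in> B2")
        case True then show ?thesis using b(2) unfolding Dp_def[OF c1] by simp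
      next
        case False then show ?thesis using Dp_nonneg[OF c1 gamble_const] by simp
      qed
    next
      obtain x2 where "x2 \<in> B2" using B2 by blast
      then have "(\<lambda>x1. f1 x1 * indicator B2 x2) = f1" by (simp add: indicator_def)
      moreover have "f1 \<noteq> (\<lambda>_. 0)" using b(2) cohD_zero[OF c1] by blast
      ultimately show "[] \<noteq> [] \<or> (\<exists>x2. (\<lambda>x1. f1 x1 * indicator B2 x2) \<noteq> (\<lambda>_. 0))" by auto
    qed (auto simp: fx)
    have r1: "Rep D1 D2 (\<lambda>x1 x2. f (x1, x2))"
    proof (rule RepI[where L = "[(f1, B2)]" and \<Phi> = "\<lambda>x1 x2. 0"])
      fix x1 show "(\<lambda>x2. 0) \<in> Dp D2" using Dp_nonneg[OF c2 gamble_const] by simp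
    qed (use b(2) B2 in \<open>auto simp: fx\<close>)
    show ?thesis using r1 r2 by blast
  next
    case c
    then have g: "gamble f" and nn: "\<forall>x. 0 \<le> f x" and nz: "f \<noteq> (\<lambda>x. 0)" unfolding gambles_pos_def by auto
    obtain y1 y2 where y: "f (y1, y2) \<noteq> 0" using nz by fastforce
    have r1: "Rep D1 D2 (\<lambda>x1 x2. f (x1, x2))"
    proof (rule RepI[where L = "[]" and \<Phi> = "\<lambda>x1 x2. f (x1, x2)"])
      fix x1 show "(\<lambda>x2. f (x1, x2)) \<in> Dp D2" using Dp_nonneg[OF c2 gamble_section[OF g]] nn by blast
    next
      show "[] \<noteq> [] \<or> (\<exists>x1. (\<lambda>x2. f (x1, x2)) \<noteq> (\<lambda>_. 0))" using y by (metis (mono_tags))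
    qed auto
    have r2: "Rep D2 D1 (\<lambda>x2 x1. f (x1, x2))"
    proof (rule RepI[where L = "[]" and \<Phi> = "\<lambda>x2 x1. f (x1, x2)"])
      fix x2 show "(\<lambda>x1. f (x1, x2)) \<in> Dp D1" using Dp_nonneg[OF c1 gamble_section2[OF g]] nn by blast
    next
      show "[] \<noteq> [] \<or> (\<exists>x2. (\<lambda>x1. f (x1, x2)) \<noteq> (\<lambda>_. 0))" using y by (metis (mono_tags))
    qed auto
    show ?thesis using r1 r2 by blast
  qed
next
  fix f and c :: real
  assume "Rep D1 D2 (\<lambda>x1 x2. f (x1, x2)) \<and> Rep D2 D1 (\<lambda>x2 x1. f (x1, x2))" "0 < c"
  then show "Rep D1 D2 (\<lambda>x1 x2. c * f (x1, x2)) \<and> Rep D2 D1 (\<lambda>x2 x1. c * f (x1, x2))"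
    using Rep_scale[OF c1 c2] Rep_scale[OF c2 c1] by blast
next
  fix f g
  assume "Rep D1 D2 (\<lambda>x1 x2. f (x1, x2)) \<and> Rep D2 D1 (\<lambda>x2 x1. f (x1, x2))"
    "Rep D1 D2 (\<lambda>x1 x2. g (x1, x2)) \<and> Rep D2 D1 (\<lambda>x2 x1. g (x1, x2))"
  then show "Rep D1 D2 (\<lambda>x1 x2. f (x1, x2) + g (x1, x2)) \<and> Rep D2 D1 (\<lambda>x2 x1. f (x1, x2) + g (x1, x2))"
    using Rep_add[OF c1 c2] Rep_add[OF c2 c1] by blast
qed

lemma prod_coherent: "coherent_D (prod_D Bs1 Bs2 D1 D2)"
  unfolding coherent_D_def
proof (intro conjI ballI allI impI)
  show "prod_D Bs1 Bs2 D1 D2 \<subseteq> gambles"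
  proof
    fix h assume "h \<in> prod_D Bs1 Bs2 D1 D2"
    then have "gamble h" unfolding prod_D_def natext_def
    proof (rule posi_induct)
      fix f assume "f \<in> ({(\<lambda>x. cyl2 f2 x * indicator (cylset1 B1) x) | f2 B1. f2 \<in> D2 \<and> B1 \<in> Bs1 \<union> {UNIV}}
           \<union> {(\<lambda>x. cyl1 f1 x * indicator (cylset2 B2) x) | f1 B2. f1 \<in> D1 \<and> B2 \<in> Bs2 \<union> {UNIV}}) \<union> gambles_pos"
      then consider (a) f2 B1 where "f = (\<lambda>x. cyl2 f2 x * indicator (cylset1 B1) x)" "f2 \<in> D2"
        | (b) f1 B2 where "f = (\<lambda>x. cyl1 f1 x * indicator (cylset2 B2) x)" "f1 \<in> D1"
        | (c) "f \<in> gambles_pos" by blast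
      then show "gamble f"
      proof cases
        case a then show ?thesis using gamble_mult_indicator[OF gamble_cyl2[OF cohD_gamble[OF c2 a(2)]]] by simp
      next
        case b then show ?thesis using gamble_mult_indicator[OF gamble_cyl1[OF cohD_gamble[OF c1 b(2)]]] by simp
      next
        case c then show ?thesis unfolding gambles_pos_def by simp
      qed
    next
      fix f :: "'a \<times> 'b \<Rightarrow> real" and c :: real assume "gamble f" "0 < c" then show "gamble (\<lambda>x. c * f x)" by (intro gamble_scale)
    next
      fix f g :: "'a \<times> 'b \<Rightarrow> real" assume "gamble f" "gamble g" then show "gamble (\<lambda>x. f x + g x)" by (rule gamble_add)
    qed
    then show "h \<in> gambles" unfolding gambles_def by simp
  qed
next
  fix f :: "'a \<times> 'b \<Rightarrow> real" assume "f \<in> gambles" "(\<forall>x. 0 \<le> f x) \<and> f \<noteq> (\<lambda>x. 0)"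
  then have "f \<in> gambles_pos" unfolding gambles_def gambles_pos_def by auto
  then show "f \<in> prod_D Bs1 Bs2 D1 D2" unfolding prod_D_def natext_def by (intro posi_single) auto
next
  fix f and lam :: real assume "f \<in> prod_D Bs1 Bs2 D1 D2" "0 < lam"
  then show "(\<lambda>x. lam * f x) \<in> prod_D Bs1 Bs2 D1 D2" unfolding prod_D_def natext_def by (rule posi_scale)
next
  fix f g assume "f \<in> prod_D Bs1 Bs2 D1 D2" "g \<in> prod_D Bs1 Bs2 D1 D2"
  then show "(\<lambda>x. f x + g x) \<in> prod_D Bs1 Bs2 D1 D2" unfolding prod_D_def natext_def by (rule posi_add)
next
  fix f :: "'a \<times> 'b \<Rightarrow> real" assume "f \<in> gambles" "\<forall>x. f x \<le> 0"
  show "f \<notin> prod_D Bs1 Bs2 D1 D2"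
  proof
    assume "f \<in> prod_D Bs1 Bs2 D1 D2"
    then have "Rep D1 D2 (\<lambda>x1 x2. f (x1, x2))" using prod_Rep by blast
    then show False using Rep_nonpos[OF c1 c2] \<open>\<forall>x. f x \<le> 0\<close> by blast
  qed
qed

lemma prod_marg1:
  assumes f1: "gamble f1" and B2: "B2 \<in> Bs2 \<union> {UNIV}"
  shows "cgamble (cyl1 f1) \<mu> (cylset1 B1 \<inter> cylset2 B2) \<in> prod_D Bs1 Bs2 D1 D2 \<longleftrightarrow> cgamble f1 \<mu> B1 \<in> D1"
proof -
  have eq: "cgamble (cyl1 f1) \<mu> (cylset1 B1 \<inter> cylset2 B2) = (\<lambda>x. cyl1 (cgamble f1 \<mu> B1) x * indicator (cylset2 B2) x)"
    by (auto simp: cgamble_def cyl1_def cylset1_def cylset2_def indicator_def fun_eq_iff)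
  have ne: "B2 \<noteq> {}" using B2 e2 by auto
  show ?thesis
  proof
    assume "cgamble (cyl1 f1) \<mu> (cylset1 B1 \<inter> cylset2 B2) \<in> prod_D Bs1 Bs2 D1 D2"
    then have "Rep D1 D2 (\<lambda>x1 x2. cgamble (cyl1 f1) \<mu> (cylset1 B1 \<inter> cylset2 B2) (x1, x2))" using prod_Rep by blast
    then show "cgamble f1 \<mu> B1 \<in> D1"
    proof (rule Rep_le[OF c1 c2 _ _ ne gamble_cgamble[OF f1]])
      fix x1 x2 show "cgamble (cyl1 f1) \<mu> (cylset1 B1 \<inter> cylset2 B2) (x1, x2) \<le> cgamble f1 \<mu> B1 x1 * indicator B2 x2"
        unfolding eq by (simp add: cyl1_def cylset2_def indicator_def)
    qed
  next
    assume "cgamble f1 \<mu> B1 \<in> D1"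
    then show "cgamble (cyl1 f1) \<mu> (cylset1 B1 \<inter> cylset2 B2) \<in> prod_D Bs1 Bs2 D1 D2"
      unfolding eq prod_D_def natext_def using B2 by (intro posi_single) blast
  qed
qed

lemma prod_marg2:
  assumes f2: "gamble f2" and B1: "B1 \<in> Bs1 \<union> {UNIV}"
  shows "cgamble (cyl2 f2) \<mu> (cylset2 B2 \<inter> cylset1 B1) \<in> prod_D Bs1 Bs2 D1 D2 \<longleftrightarrow> cgamble f2 \<mu> B2 \<in> D2"
proof -
  have eq: "cgamble (cyl2 f2) \<mu> (cylset2 B2 \<inter> cylset1 B1) = (\<lambda>x. cyl2 (cgamble f2 \<mu> B2) x * indicator (cylset1 B1) x)"
    by (auto simp: cgamble_def cyl2_def cylset1_def cylset2_def indicator_def fun_eq_iff)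
  have ne: "B1 \<noteq> {}" using B1 e1 by auto
  show ?thesis
  proof
    assume "cgamble (cyl2 f2) \<mu> (cylset2 B2 \<inter> cylset1 B1) \<in> prod_D Bs1 Bs2 D1 D2"
    then have "Rep D2 D1 (\<lambda>x2 x1. cgamble (cyl2 f2) \<mu> (cylset2 B2 \<inter> cylset1 B1) (x1, x2))" using prod_Rep by blast
    then show "cgamble f2 \<mu> B2 \<in> D2"
    proof (rule Rep_le[OF c2 c1 _ _ ne gamble_cgamble[OF f2]])
      fix x1 x2 show "cgamble (cyl2 f2) \<mu> (cylset2 B2 \<inter> cylset1 B1) (x2, x1) \<le> cgamble f2 \<mu> B2 x1 * indicator B1 x2"
        unfolding eq by (simp add: cyl2_def cylset1_def indicator_def)
    qed
  next
    assume "cgamble f2 \<mu> B2 \<in> D2"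
    then show "cgamble (cyl2 f2) \<mu> (cylset2 B2 \<inter> cylset1 B1) \<in> prod_D Bs1 Bs2 D1 D2"
      unfolding eq prod_D_def natext_def using B1 by (intro posi_single) blast
  qed
qed

lemma lp_marg1: assumes "gamble f1" "B2 \<in> Bs2 \<union> {UNIV}" shows
   "lowprev_D (prod_D Bs1 Bs2 D1 D2) (cyl1 f1) (cylset1 B1 \<inter> cylset2 B2) = lowprev_D D1 f1 B1"
proof -
  have "{ereal \<mu> |\<mu>. cgamble (cyl1 f1) \<mu> (cylset1 B1 \<inter> cylset2 B2) \<in> prod_D Bs1 Bs2 D1 D2}
      = {ereal \<mu> |\<mu>. cgamble f1 \<mu> B1 \<in> D1}" using prod_marg1[OF assms] by blast
  then show ?thesis unfolding lowprev_D_def by simp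
qed

lemma lp_marg2: assumes "gamble f2" "B1 \<in> Bs1 \<union> {UNIV}" shows
   "lowprev_D (prod_D Bs1 Bs2 D1 D2) (cyl2 f2) (cylset2 B2 \<inter> cylset1 B1) = lowprev_D D2 f2 B2"
proof -
  have "{ereal \<mu> |\<mu>. cgamble (cyl2 f2) \<mu> (cylset2 B2 \<inter> cylset1 B1) \<in> prod_D Bs1 Bs2 D1 D2}
      = {ereal \<mu> |\<mu>. cgamble f2 \<mu> B2 \<in> D2}" using prod_marg2[OF assms] by blast
  then show ?thesis unfolding lowprev_D_def by simp
qed

end


theorem proposition44:
  fixes Bs1 :: "'a set set" and Bs2 :: "'b set set"
    and C1 :: "(('a \<Rightarrow> real) \<times> 'a set) set" and P1 :: "'a clp"
    and C2 :: "(('b \<Rightarrow> real) \<times> 'b set) set" and P2 :: "'b clp"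
    and C :: "((('a \<times> 'b) \<Rightarrow> real) \<times> ('a \<times> 'b) set) set"
  assumes "{} \<notin> Bs1" and "{} \<notin> Bs2"
    and "coherent_lp C1 P1" and "coherent_lp C2 P2"
    and "C \<subseteq> Ccond"
    and "independent_domain Bs1 Bs2 C"
    and "\<forall>(f, B)\<in>C1. (cyl1 f, cylset1 B) \<in> C"
    and "\<forall>(f, B)\<in>C2. (cyl2 f, cylset2 B) \<in> C"
  shows "independent_product Bs1 Bs2 C1 P1 C2 P2 C (prod_lp Bs1 Bs2 C1 P1 C2 P2)"
proof -
  define D1 where "D1 = natext_lp C1 P1"
  define D2 where "D2 = natext_lp C2 P2"
  have c1: "coherent_D D1" unfolding D1_def using natext_lp_props(1)[OF assms(3)] .
  have c2: "coherent_D D2" unfolding D2_def using natext_lp_props(1)[OF assms(4)] .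
  have l1: "lowprev_D D1 f B = P1 f B" if "(f, B) \<in> C1" for f B
    unfolding D1_def using natext_lp_props(2)[OF assms(3) that] .
  have l2: "lowprev_D D2 f B = P2 f B" if "(f, B) \<in> C2" for f B
    unfolding D2_def using natext_lp_props(2)[OF assms(4) that] .
  have C1C: "C1 \<subseteq> Ccond" using assms(3) unfolding coherent_lp_def by blast
  have C2C: "C2 \<subseteq> Ccond" using assms(4) unfolding coherent_lp_def by blast
  have PP: "prod_lp Bs1 Bs2 C1 P1 C2 P2 = lowprev_D (prod_D Bs1 Bs2 D1 D2)"
    by (simp add: prod_lp_def D1_def D2_def)
  let ?P = "lowprev_D (prod_D Bs1 Bs2 D1 D2)"
  have m1: "?P (cyl1 f1) (cylset1 B1 \<inter> cylset2 B2) = lowprev_D D1 f1 B1"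
    if "gamble f1" "B2 \<in> Bs2 \<union> {UNIV}" for f1 B1 B2
    using lp_marg1[OF c1 c2 assms(1,2) that] .
  have m1u: "?P (cyl1 f1) (cylset1 B1) = lowprev_D D1 f1 B1" if "gamble f1" for f1 B1
  proof -
    have "cylset1 B1 \<inter> cylset2 UNIV = (cylset1 B1 :: ('a \<times> 'b) set)" by (simp add: cylset2_def)
    then show ?thesis using m1[OF that, of UNIV B1] by simp
  qed
  have m2: "?P (cyl2 f2) (cylset2 B2 \<inter> cylset1 B1) = lowprev_D D2 f2 B2"
    if "gamble f2" "B1 \<in> Bs1 \<union> {UNIV}" for f2 B1 B2
    using lp_marg2[OF c1 c2 assms(1,2) that] .
  have m2u: "?P (cyl2 f2) (cylset2 B2) = lowprev_D D2 f2 B2" if "gamble f2" for f2 B2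
  proof -
    have "cylset2 B2 \<inter> cylset1 UNIV = (cylset2 B2 :: ('a \<times> 'b) set)" by (simp add: cylset1_def)
    then show ?thesis using m2[OF that, of UNIV B2] by simp
  qed
  show ?thesis
    unfolding independent_product_def epistemically_independent_def PP
  proof (intro conjI)
    show "independent_domain Bs1 Bs2 C" by (rule assms(6))
    show "coherent_lp C ?P" unfolding coherent_lp_def
      using assms(5) prod_coherent[OF c1 c2 assms(1,2)] by blast
    show "\<forall>(f1, B1)\<in>Ccond. (cyl1 f1, cylset1 B1) \<in> C \<longrightarrow> (\<forall>B2\<in>Bs2.
        ?P (cyl1 f1) (cylset1 B1) = ?P (cyl1 f1) (cylset1 B1 \<inter> cylset2 B2))"
      unfolding Ccond_def using m1 m1u by auto
    show "\<forall>(f2, B2)\<in>Ccond. (cyl2 f2, cylset2 B2) \<in> C \<longrightarrow> (\<forall>B1\<in>Bs1.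
        ?P (cyl2 f2) (cylset2 B2) = ?P (cyl2 f2) (cylset2 B2 \<inter> cylset1 B1))"
      unfolding Ccond_def using m2 m2u by auto
    show "\<forall>(f, B)\<in>C1. ?P (cyl1 f) (cylset1 B) = P1 f B"
      using C1C m1u l1 unfolding Ccond_def by auto
    show "\<forall>(f, B)\<in>C2. ?P (cyl2 f) (cylset2 B) = P2 f B"
      using C2C m2u l2 unfolding Ccond_def by auto
  qed
qed

end
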